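(* Let $n,k$ be integers with $2<2k\le n$ such that $\mathrm{Pet}(n,k)$ is non-bipartite. Then either $g_{odd}(\mathrm{Pet}(n,k))=k+3$, or $$\max\Big(\frac{n}{k},\ \min\{\gcd(n,k-1),\gcd(n,k+1)\}+2\Big)\ \le\ g_{odd}(\mathrm{Pet}(n,k))\ \le\ \frac{n}{k}\,\mathrm{par}(k)+k+1,$$ where $\mathrm{par}(k)=1$ if $k$ is odd and $\mathrm{par}(k)=0$ if $k$ is even.
   Context: For integers $n,k$ with $2<2k\le n$, the generalized Petersen graph $\mathrm{Pet}(n,k)$ has vertex set $\{u_0,\dots,u_{n-1}\}\cup\{v_0,\dots,v_{n-1}\}$ and edge set $\{u_iu_{i+1}\}\cup\{u_iv_i\}\cup\{v_iv_{i+k}\}$, $i\in\{0,\dots,n-1\}$, with indices taken modulo $n$. For a non-bipartite graph $G$, the odd girth $g_{odd}(G)$ is the length of a shortest odd cycle of $G$. *)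

theory Defs
  imports Complex_Main
begin

definition is_cycle :: "'a set \<Rightarrow> ('a \<Rightarrow> 'a \<Rightarrow> bool) \<Rightarrow> 'a list \<Rightarrow> bool" where
  "is_cycle V E xs \<longleftrightarrow> length xs \<ge> 3 \<and> distinct xs \<and> set xs \<subseteq> V \<and>
     (\<forall>i < length xs. E (xs ! i) (xs ! ((i + 1) mod length xs)))"

definition bipartite :: "'a set \<Rightarrow> ('a \<Rightarrow> 'a \<Rightarrow> bool) \<Rightarrow> bool" where
  "bipartite V E \<longleftrightarrow> (\<exists>c :: 'a \<Rightarrow> bool. \<forall>x\<in>V. \<forall>y\<in>V. E x y \<longrightarrow> c x \<noteq> c y)"

definition odd_girth :: "'a set \<Rightarrow> ('a \<Rightarrow> 'a \<Rightarrow> bool) \<Rightarrow> nat" where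
  "odd_girth V E = (LEAST L. \<exists>xs. is_cycle V E xs \<and> length xs = L \<and> odd L)"

(* Generalized Petersen graph Pet(n,k): vertex (False,i) is u_i, (True,i) is v_i, 0 <= i < n. *)
definition pet_V :: "nat \<Rightarrow> (bool \<times> nat) set" where
  "pet_V n = UNIV \<times> {..<n}"

definition pet_E :: "nat \<Rightarrow> nat \<Rightarrow> bool \<times> nat \<Rightarrow> bool \<times> nat \<Rightarrow> bool" where
  "pet_E n k x y = (case x of (b, i) \<Rightarrow> case y of (c, j) \<Rightarrow>
      i < n \<and> j < n \<and>
      ((\<not> b \<and> \<not> c \<and> (j = (i + 1) mod n \<or> i = (j + 1) mod n)) \<or>
       (b \<noteq> c \<and> i = j) \<or>
       (b \<and> c \<and> (j = (i + k) mod n \<or> i = (j + k) mod n))))"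

definition par :: "nat \<Rightarrow> nat" where
  "par k = (if odd k then 1 else 0)"

end

theory Submission
  imports Defs
begin

lemma modhelp: "int n dvd (int ((a + c) mod n) - int a - int c)"
proof -
  have e: "int ((a+c) mod n) = (int a + int c) mod int n" by (simp add: of_nat_mod)
  have "int n dvd ((int a + int c) mod int n - (int a + int c))"
    by (simp only: mod_eq_dvd_iff[symmetric] mod_mod_trivial)
  then show ?thesis by (simp add: e diff_diff_eq)
qed
lemma tele:
  assumes "L > 0"
  shows "(\<Sum>i<L. g (xs ! ((i+1) mod L))) = (\<Sum>i<L. (g (xs ! i) :: int))"
proof -
  obtain m where m: "L = Suc m" using assms by (cases L) auto
  have "(\<Sum>i<Suc m. g (xs ! ((i+1) mod Suc m))) = (\<Sum>i<m. g (xs ! ((i+1) mod Suc m))) + g (xs ! 0)"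
    by simp
  also have "(\<Sum>i<m. g (xs ! ((i+1) mod Suc m))) = (\<Sum>i<m. g (xs ! Suc i))"
    by (rule sum.cong) auto
  also have "\<dots> + g (xs ! 0) = (\<Sum>i<Suc m. g (xs ! i))"
    by (subst sum.lessThan_Suc_shift) simp
  finally show ?thesis using m by simp
qed

lemma proj:
  fixes n k :: nat and xs :: "(bool \<times> nat) list"
  assumes cyc: "is_cycle (pet_V n) (pet_E n k) xs" and oddL: "odd (length xs)"
  shows "\<exists>x y::int. int n dvd (x + int k * y) \<and> odd (x+y) \<and> \<bar>x\<bar>+\<bar>y\<bar> \<le> int (length xs) \<and>
     (x \<noteq> 0 \<and> y \<noteq> 0 \<longrightarrow> \<bar>x\<bar>+\<bar>y\<bar>+2 \<le> int (length xs))"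
proof -
  define L where "L = length xs"
  have L3: "L \<ge> 3" using cyc by (simp add: is_cycle_def L_def)
  define p where "p i = xs ! i" for i
  define pn where "pn i = xs ! ((i+1) mod L)" for i
  have E: "pet_E n k (p i) (pn i)" if "i<L" for i using cyc that by (simp add: is_cycle_def L_def p_def pn_def)
  define dx :: "nat \<Rightarrow> int" where "dx i = (if \<not>fst(p i) \<and> \<not>fst(pn i) then (if snd(pn i) = (snd(p i)+1) mod n then 1 else -1) else 0)" for i
  define dy :: "nat \<Rightarrow> int" where "dy i = (if fst(p i) \<and> fst(pn i) then (if snd(pn i) = (snd(p i)+k) mod n then 1 else -1) else 0)" for i
  define ds :: "nat \<Rightarrow> int" where "ds i = (if fst (p i) \<noteq> fst (pn i) then 1 else 0)" for i
  define tb :: "nat \<Rightarrow> int" where "tb i = of_bool (fst (pn i)) - of_bool (fst (p i))" for i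
  have step: "int n dvd (int (snd (pn i)) - int (snd (p i)) - dx i - int k * dy i)" if "i < L" for i
  proof -
    obtain b a where pa: "p i = (b,a)" by (cases "p i") auto
    obtain c j where pb: "pn i = (c,j)" by (cases "pn i") auto
    have e: "(\<not> b \<and> \<not> c \<and> (j = (a+1) mod n \<or> a = (j+1) mod n)) \<or> (b \<noteq> c \<and> a = j) \<or> (b \<and> c \<and> (j = (a+k) mod n \<or> a = (j+k) mod n))"
      using E[OF that] by (simp add: pet_E_def pa pb)
    have h1: "int n dvd (int j - int a - 1)" if "j = (a+1) mod n" using modhelp[of n a 1] that by simp
    have h2: "int n dvd (int j - int a + 1)" if "a = (j+1) mod n"
    proof -
      have "int n dvd (int a - int j - 1)" using modhelp[of n j 1] that by simp
      moreover have "int j - int a + 1 = - (int a - int j - 1)" by simp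
      ultimately show ?thesis by (simp only: dvd_minus_iff)
    qed
    have h3: "int n dvd (int j - int a - int k)" if "j = (a+k) mod n" using modhelp[of n a k] that by simp
    have h4: "int n dvd (int j - int a + int k)" if "a = (j+k) mod n"
    proof -
      have "int n dvd (int a - int j - int k)" using modhelp[of n j k] that by simp
      moreover have "int j - int a + int k = - (int a - int j - int k)" by simp
      ultimately show ?thesis by (simp only: dvd_minus_iff)
    qed
    have dxe: "dx i = (if \<not>b \<and> \<not>c then (if j = (a+1) mod n then 1 else -1) else 0)"
      by (simp add: dx_def pa pb)
    have dye: "dy i = (if b \<and> c then (if j = (a+k) mod n then 1 else -1) else 0)"
      by (simp add: dy_def pa pb)
    have sp: "int (snd (pn i)) - int (snd (p i)) = int j - int a" by (simp add: pa pb)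
    from e consider (o1) "\<not>b" "\<not>c" "j = (a+1) mod n" | (o2) "\<not>b" "\<not>c" "j \<noteq> (a+1) mod n" "a = (j+1) mod n"
      | (s) "b\<noteq>c" "a=j" | (i1) "b" "c" "j = (a+k) mod n" | (i2) "b" "c" "j \<noteq> (a+k) mod n" "a = (j+k) mod n"
      by blast
    then show ?thesis
    proof cases
      case o1
      then have "dx i = 1" "dy i = 0" using dxe dye by simp_all
      then show ?thesis using h1[OF o1(3)] sp by simp
    next
      case o2
      then have "dx i = -1" "dy i = 0" using dxe dye by simp_all
      then show ?thesis using h2[OF o2(4)] sp by simp
    next
      case s
      then have "dx i = 0" "dy i = 0" using dxe dye by auto
      then show ?thesis using s sp by simp
    next
      case i1
      then have "dx i = 0" "dy i = 1" using dxe dye by simp_all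
      then show ?thesis using h3[OF i1(3)] sp by simp
    next
      case i2
      then have "dx i = 0" "dy i = -1" using dxe dye by simp_all
      then show ?thesis using h4[OF i2(4)] sp by simp
    qed
  qed
  have absum: "\<bar>dx i\<bar> + \<bar>dy i\<bar> + ds i = 1" for i
    by (auto simp: dx_def dy_def ds_def)
  have ev1: "even (\<bar>dx i\<bar> - dx i)" for i by (auto simp: dx_def)
  have ev2: "even (\<bar>dy i\<bar> - dy i)" for i by (auto simp: dy_def)
  have ev3: "even (ds i - tb i)" for i by (auto simp: ds_def tb_def)
  have tel: "(\<Sum>i<L. g (pn i)) = (\<Sum>i<L. (g (p i)::int))" for g
    unfolding pn_def p_def using tele[of L g xs] L3 by simp
  define X where "X = (\<Sum>i<L. dx i)"
  define Y where "Y = (\<Sum>i<L. dy i)"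
  define S where "S = (\<Sum>i<L. ds i)"
  have "int n dvd (\<Sum>i<L. int (snd (pn i)) - int (snd (p i)) - dx i - int k * dy i)"
    by (rule dvd_sum) (use step in auto)
  moreover have "(\<Sum>i<L. int (snd (pn i)) - int (snd (p i)) - dx i - int k * dy i)
     = (\<Sum>i<L. int (snd (pn i))) - (\<Sum>i<L. int (snd (p i))) - X - int k * Y"
    by (simp add: sum_subtractf sum_distrib_left X_def Y_def)
  ultimately have "int n dvd (- (X + int k * Y))" using tel[of "\<lambda>v. int (snd v)"] by simp
  then have D: "int n dvd (X + int k * Y)" by (simp only: dvd_minus_iff)
  have Leq: "int L = (\<Sum>i<L. \<bar>dx i\<bar>) + (\<Sum>i<L. \<bar>dy i\<bar>) + S"
  proof -
    have "int L = (\<Sum>i<L. \<bar>dx i\<bar> + \<bar>dy i\<bar> + ds i)" using absum by simp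
    then show ?thesis by (simp add: sum.distrib S_def)
  qed
  have aX: "\<bar>X\<bar> \<le> (\<Sum>i<L. \<bar>dx i\<bar>)" unfolding X_def by (rule sum_abs)
  have aY: "\<bar>Y\<bar> \<le> (\<Sum>i<L. \<bar>dy i\<bar>)" unfolding Y_def by (rule sum_abs)
  have tb0: "(\<Sum>i<L. tb i) = 0"
    using tel[of "\<lambda>v. of_bool (fst v)"] by (simp add: tb_def sum_subtractf)
  have e1: "even (\<Sum>i<L. \<bar>dx i\<bar> - dx i)" by (rule dvd_sum) (use ev1 in auto)
  have e2: "even (\<Sum>i<L. \<bar>dy i\<bar> - dy i)" by (rule dvd_sum) (use ev2 in auto)
  have e3: "even (\<Sum>i<L. ds i - tb i)" by (rule dvd_sum) (use ev3 in auto)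
  have Sev: "even S" using e3 tb0 by (simp add: sum_subtractf S_def)
  have "int L - X - Y = (\<Sum>i<L. \<bar>dx i\<bar> - dx i) + (\<Sum>i<L. \<bar>dy i\<bar> - dy i) + (\<Sum>i<L. ds i - tb i)"
    using Leq tb0 by (simp add: sum_subtractf X_def Y_def S_def)
  then have "even (int L - X - Y)" using e1 e2 e3 by simp
  moreover have "odd (int L)" using oddL L_def by simp
  ultimately have OXY: "odd (X + Y)"
    by presburger
  have S0: "S \<ge> 0" unfolding S_def by (rule sum_nonneg) (simp add: ds_def)
  have S2: "S \<ge> 2" if "X \<noteq> 0" "Y \<noteq> 0"
  proof (rule ccontr)
    assume "\<not> S \<ge> 2"
    with Sev S0 have "S = 0" by presburger
    then have z: "\<forall>i\<in>{..<L}. ds i = 0" unfolding S_def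
      by (subst (asm) sum_nonneg_eq_0_iff) (auto simp: ds_def)
    have same: "fst (pn i) = fst (p i)" if "i < L" for i using z that by (auto simp: ds_def split: if_splits)
    have const: "i < L \<Longrightarrow> fst (p i) = fst (p 0)" for i
    proof (induction i)
      case 0 then show ?case by simp
    next
      case (Suc i)
      have "pn i = p (Suc i)" using Suc.prems by (simp add: pn_def p_def)
      then show ?case using Suc same[of i] by simp
    qed
    obtain i where i: "i < L" "dx i \<noteq> 0"
    proof (rule ccontr)
      assume "\<not> thesis" then have "\<forall>i<L. dx i = 0" using that by blast
      then have "X = 0" unfolding X_def by simp
      with \<open>X \<noteq> 0\<close> show False by simp
    qed
    obtain j where j: "j < L" "dy j \<noteq> 0"
    proof (rule ccontr)
      assume "\<not> thesis" then have "\<forall>i<L. dy i = 0" using that by blast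
      then have "Y = 0" unfolding Y_def by simp
      with \<open>Y \<noteq> 0\<close> show False by simp
    qed
    have "\<not> fst (p i)" using i by (auto simp: dx_def split: if_splits)
    moreover have "fst (p j)" using j by (auto simp: dy_def split: if_splits)
    ultimately show False using const[OF i(1)] const[OF j(1)] by simp
  qed
  show ?thesis
  proof (intro exI conjI impI)
    show "int n dvd X + int k * Y" by (rule D)
    show "odd (X+Y)" by (rule OXY)
    show "\<bar>X\<bar> + \<bar>Y\<bar> \<le> int (length xs)" using Leq aX aY S0 L_def by linarith
    show "\<bar>X\<bar> + \<bar>Y\<bar> + 2 \<le> int (length xs)" if "X \<noteq> 0 \<and> Y \<noteq> 0"
      using Leq aX aY S2 that L_def by linarith
  qed
qed



lemma cycle_of_fun:
  assumes "L \<ge> 3" "inj_on f {..<L}" "\<forall>i<L. f i \<in> V" "\<forall>i<L. E (f i) (f ((i+1) mod L))"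
  shows "is_cycle V E (map f [0..<L])"
  using assms by (auto simp: is_cycle_def distinct_map atLeast0LessThan)

lemma even_mod_even: "even (n::nat) \<Longrightarrow> even (x mod n) \<longleftrightarrow> even x"
  using even_add[of "n*(x div n)" "x mod n"] by simp

lemma bip:
  assumes "even n" "odd k"
  shows "bipartite (pet_V n) (pet_E n k)"
  unfolding bipartite_def
proof (intro exI[of _ "\<lambda>(b,i). b \<noteq> even i"] ballI impI)
  fix x y assume "x \<in> pet_V n" "y \<in> pet_V n" "pet_E n k x y"
  then obtain b i c j where xy: "x = (b,i)" "y = (c,j)"
    and e: "(\<not> b \<and> \<not> c \<and> (j = (i+1) mod n \<or> i = (j+1) mod n)) \<or> (b \<noteq> c \<and> i = j) \<or> (b \<and> c \<and> (j = (i+k) mod n \<or> i = (j+k) mod n))"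
    by (cases x, cases y) (auto simp: pet_E_def)
  have p1: "even ((a+1) mod n) \<longleftrightarrow> \<not> even a" for a using even_mod_even[OF assms(1)] by simp
  have p2: "even ((a+k) mod n) \<longleftrightarrow> \<not> even a" for a using even_mod_even[OF assms(1)] assms(2) by simp
  from e show "(case x of (b, i) \<Rightarrow> b \<noteq> even i) \<noteq> (case y of (b, i) \<Rightarrow> b \<noteq> even i)"
    unfolding xy using p1 p2 by auto
qed

lemma cycA:
  assumes "2 \<le> k" "2*k \<le> n"
  shows "is_cycle (pet_V n) (pet_E n k)
     (map (\<lambda>i. if i \<le> k then (False,i) else if i = k+1 then (True,k) else (True,0)) [0..<k+3])"
  (is "is_cycle _ _ (map ?f _)")
proof (rule cycle_of_fun)
  show "inj_on ?f {..<k+3}" using assms by (auto simp: inj_on_def split: if_splits)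
  show "\<forall>i<k+3. ?f i \<in> pet_V n" using assms by (auto simp: pet_V_def)
  show "\<forall>i<k+3. pet_E n k (?f i) (?f ((i+1) mod (k+3)))"
  proof (intro allI impI)
    fix i assume i: "i < k+3"
    then consider "i < k" | "i = k" | "i = k+1" | "i = k+2" by linarith
    then show "pet_E n k (?f i) (?f ((i+1) mod (k+3)))"
    proof cases
      case 1 then show ?thesis using assms by (auto simp: pet_E_def)
    next
      case 2 then show ?thesis using assms by (auto simp: pet_E_def)
    next
      case 3 then show ?thesis using assms by (auto simp: pet_E_def)
    next
      case 4
      then have "i+1 = k+3" by simp
      then have "(i+1) mod (k+3) = 0" by (metis mod_self)
      then show ?thesis using assms 4 by (simp add: pet_E_def)
    qed
  qed
qed simp

lemma vmod:
  assumes "r + q*k = (n::nat)" "k \<ge> 1" "j \<le> q"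
  shows "(r + j*k) mod n = (if j = q then 0 else r + j*k)"
proof (cases "j = q")
  case True then show ?thesis using assms by simp
next
  case False
  then have "j < q" using assms by simp
  then have "j*k < q*k" using assms by simp
  then have "r + j*k < n" using assms by linarith
  then show ?thesis using False by simp
qed

lemma cycB:
  assumes r: "r \<ge> 1" and q: "q \<ge> 1" and n: "r + q*k = (n::nat)" and k: "k \<ge> 1"
  shows "is_cycle (pet_V n) (pet_E n k)
     (map (\<lambda>i. if i \<le> r then (False,i) else (True,(r+(i-r-1)*k) mod n)) [0..<r+q+2])"
  (is "is_cycle _ _ (map ?f _)")
proof (rule cycle_of_fun)
  have "q*k \<ge> 1" using q k by simp
  then have rn: "r < n" using n by linarith
  have gi: "inj_on (\<lambda>j. (r + j*k) mod n) {..q}"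
  proof (rule inj_onI)
    fix j j' assume jj: "j \<in> {..q}" "j' \<in> {..q}" "(r + j*k) mod n = (r + j'*k) mod n"
    show "j = j'"
      using jj vmod[OF n k, of j] vmod[OF n k, of j'] r k by (auto split: if_splits)
  qed
  show "inj_on ?f {..<r+q+2}"
  proof (rule inj_onI)
    fix i i' assume ii: "i \<in> {..<r+q+2}" "i' \<in> {..<r+q+2}" "?f i = ?f i'"
    show "i = i'"
    proof (cases "i \<le> r")
      case True then show ?thesis using ii by (auto split: if_splits)
    next
      case False
      then have "\<not> i' \<le> r" using ii by (auto split: if_splits)
      then have "(r+(i-r-1)*k) mod n = (r+(i'-r-1)*k) mod n" "i-r-1 \<in> {..q}" "i'-r-1 \<in> {..q}"
        using ii False by (auto split: if_splits)
      then have "i-r-1 = i'-r-1" using gi by (auto dest: inj_onD)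
      then show ?thesis using False \<open>\<not> i' \<le> r\<close> by simp
    qed
  qed
  show "\<forall>i<r+q+2. ?f i \<in> pet_V n" using rn by (auto simp: pet_V_def)
  show "\<forall>i<r+q+2. pet_E n k (?f i) (?f ((i+1) mod (r+q+2)))"
  proof (intro allI impI)
    fix i assume i: "i < r+q+2"
    then consider "i < r" | "i = r" | "r < i \<and> i < r+q+1" | "i = r+q+1" by linarith
    then show "pet_E n k (?f i) (?f ((i+1) mod (r+q+2)))"
    proof cases
      case 1 then show ?thesis using rn by (auto simp: pet_E_def)
    next
      case 2 then show ?thesis using rn by (auto simp: pet_E_def)
    next
      case 3
      define j where "j = i - r - 1"
      have j: "i = r+1+j" "j < q" using 3 unfolding j_def by linarith+
      have m: "(i+1) mod (r+q+2) = i+1" using 3 by simp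
      have a: "?f i = (True, (r + j*k) mod n)" using j by simp
      have b: "?f (i+1) = (True, (r + (j+1)*k) mod n)" using j by simp
      have c0: "((r + j*k) mod n + k) mod n = (r + j*k + k) mod n" by (rule mod_add_left_eq)
      have c: "(r + (j+1)*k) mod n = ((r + j*k) mod n + k) mod n" unfolding c0 by (simp add: algebra_simps)
      show ?thesis unfolding m a b c using rn by (auto simp: pet_E_def)
    next
      case 4
      have m: "(i+1) mod (r+q+2) = 0" using 4 by simp
      have a: "?f i = (True, 0)" using 4 n by simp
      show ?thesis unfolding m a using rn by (simp add: pet_E_def)
    qed
  qed
qed (use r q in simp)


lemma arith_main:
  fixes n k L :: nat and x y :: int
  assumes k2: "2 \<le> k" and kn: "2*k \<le> n"
    and D: "int n dvd (x + int k * y)" and O: "odd (x+y)" and B1: "\<bar>x\<bar>+\<bar>y\<bar> \<le> int L"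
    and B2: "x \<noteq> 0 \<and> y \<noteq> 0 \<longrightarrow> \<bar>x\<bar>+\<bar>y\<bar>+2 \<le> int L"
    and L3: "L \<ge> 3"
    and ev: "even k \<Longrightarrow> L \<le> k+3"
    and ne: "L \<noteq> k+3"
  shows "n \<le> k * L" and "min (gcd n (k - 1)) (gcd n (k + 1)) + 2 \<le> L"
proof -
  have "1 * int L \<le> int k * int L" using k2 by (intro mult_right_mono) auto
  then have kL: "int L \<le> int k * int L" by simp
  show "n \<le> k * L"
  proof -
    have "int n \<le> int k * int L"
    proof (cases "y = 0")
      case True
      then have "x \<noteq> 0" using O by auto
      moreover have "int n dvd x" using D True by simp
      ultimately have "\<bar>int n\<bar> \<le> \<bar>x\<bar>" by (intro dvd_imp_le_int)
      then have "int n \<le> \<bar>x\<bar>" by simp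
      then show ?thesis using B1 kL by linarith
    next
      case y: False
      show ?thesis
      proof (cases "x = 0")
        case True
        have "int k * y \<noteq> 0" using y k2 by simp
        then have "\<bar>int n\<bar> \<le> \<bar>int k * y\<bar>" using D True by (intro dvd_imp_le_int) simp_all
        then have "int n \<le> \<bar>int k * y\<bar>" by simp
        also have "\<dots> = int k * \<bar>y\<bar>" by (simp add: abs_mult)
        also have "\<dots> \<le> int k * int L" using B1 True by (simp add: mult_left_mono)
        finally show ?thesis .
      next
        case x: False
        have B: "\<bar>x\<bar>+\<bar>y\<bar>+2 \<le> int L" using B2 x y by simp
        show ?thesis
        proof (cases "x + int k * y = 0")
          case True
          then have xe: "x = - (int k * y)" by simp
          then have "x + y = y * (1 - int k)" by (simp add: algebra_simps)
          then have "odd (1 - int k)" using O by simp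
          then have "even k" by simp
          have "\<bar>x\<bar> = int k * \<bar>y\<bar>" using xe by (simp add: abs_mult)
          moreover have y1: "\<bar>y\<bar> \<ge> 1" using y by simp
          moreover have "int k * 1 \<le> int k * \<bar>y\<bar>" using y1 by (intro mult_left_mono) simp_all
          ultimately have "int L \<ge> int k + 3" using B by linarith
          with ev[OF \<open>even k\<close>] ne show ?thesis by simp
        next
          case False
          then have "\<bar>int n\<bar> \<le> \<bar>x + int k * y\<bar>" using D by (intro dvd_imp_le_int)
          then have "int n \<le> \<bar>x + int k * y\<bar>" by simp
          also have "\<dots> \<le> \<bar>x\<bar> + int k * \<bar>y\<bar>" by (simp add: abs_mult abs_triangle_ineq[THEN order_trans])
          also have "\<dots> \<le> int k * \<bar>x\<bar> + int k * \<bar>y\<bar>" using k2 by (simp add: mult_le_cancel_right1)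
          also have "\<dots> = int k * (\<bar>x\<bar> + \<bar>y\<bar>)" by (simp add: algebra_simps)
          also have "\<dots> \<le> int k * int L" using B1 by (simp add: mult_left_mono)
          finally show ?thesis .
        qed
      qed
    qed
    then show ?thesis by (simp only: of_nat_mult[symmetric] of_nat_le_iff)
  qed
  define g1 where "g1 = gcd n (k-1)"
  define g2 where "g2 = gcd n (k+1)"
  have g1n: "int g1 dvd int n" unfolding g1_def by (simp add: int_dvd_int_iff)
  have g2n: "int g2 dvd int n" unfolding g2_def by (simp add: int_dvd_int_iff)
  have g1k: "int g1 dvd int k - 1"
  proof -
    have "int g1 dvd int (k-1)" unfolding g1_def by (simp only: int_dvd_int_iff) simp
    then show ?thesis using k2 by (simp add: of_nat_diff)
  qed
  have g2k: "int g2 dvd int k + 1"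
  proof -
    have "int g2 dvd int (k+1)" unfolding g2_def by (simp only: int_dvd_int_iff) simp
    then show ?thesis by (simp add: add.commute)
  qed
  have g1le: "g1 \<le> k - 1" unfolding g1_def using k2 by (simp add: gcd_le2_nat)
  have "min g1 g2 + 2 \<le> L"
  proof (cases "y = 0")
    case True
    then have "x \<noteq> 0" using O by auto
    moreover have "int n dvd x" using D True by simp
    ultimately have "\<bar>int n\<bar> \<le> \<bar>x\<bar>" by (intro dvd_imp_le_int)
      then have "int n \<le> \<bar>x\<bar>" by simp
    then have "n \<le> L" using B1 by linarith
    then show ?thesis using g1le kn k2 by linarith
  next
    case y: False
    have Dxy: "int g1 dvd x + int k * y" by (rule dvd_trans[OF g1n D])
    show ?thesis
    proof (cases "x = 0")
      case x: False
      have B: "\<bar>x\<bar>+\<bar>y\<bar>+2 \<le> int L" using B2 x y by simp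
      have "int g1 dvd (int k - 1) * y" using g1k by simp
      then have "int g1 dvd (x + int k * y) - (int k - 1) * y" by (rule dvd_diff[OF Dxy])
      moreover have "(x + int k * y) - (int k - 1) * y = x + y" by (simp add: algebra_simps)
      ultimately have "int g1 dvd x + y" by simp
      moreover have "x + y \<noteq> 0" using O by (intro notI) simp
      ultimately have "\<bar>int g1\<bar> \<le> \<bar>x + y\<bar>" by (intro dvd_imp_le_int)
      then have "int g1 \<le> \<bar>x + y\<bar>" by simp
      then have "int g1 + 2 \<le> int L" using B by linarith
      then show ?thesis by linarith
    next
      case x: True
      have Dy: "int n dvd int k * y" using D x by simp
      have "int g1 dvd int k * y - (int k - 1) * y"
        by (rule dvd_diff[OF dvd_trans[OF g1n Dy] dvd_mult2[OF g1k]])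
      then have g1y: "int g1 dvd y" by (simp add: algebra_simps)
      have "int g2 dvd (int k + 1) * y - int k * y"
        by (rule dvd_diff[OF dvd_mult2[OF g2k] dvd_trans[OF g2n Dy]])
      then have g2y: "int g2 dvd y" by (simp add: algebra_simps)
      have yL: "\<bar>y\<bar> \<le> int L" using B1 x by simp
      have oy: "odd y" using O x by simp
      show ?thesis
      proof (cases "g1 \<le> 1")
        case True then show ?thesis using L3 by linarith
      next
        case g1: False
        show ?thesis
        proof (cases "\<bar>y\<bar> \<ge> int g1 + 2")
          case True then show ?thesis using yL by linarith
        next
          case False
          obtain t where t: "y = int g1 * t" using g1y by (auto elim: dvdE)
          have "t \<noteq> 0" using t y by auto
          have "\<bar>t\<bar> = 1"
          proof (rule ccontr)
            assume "\<bar>t\<bar> \<noteq> 1"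
            then have "\<bar>t\<bar> \<ge> 2" using \<open>t \<noteq> 0\<close> by linarith
            then have "int g1 * \<bar>t\<bar> \<ge> int g1 * 2" by (simp add: mult_left_mono)
            moreover have "\<bar>y\<bar> = int g1 * \<bar>t\<bar>" using t by (simp add: abs_mult)
            ultimately show False using False g1 by linarith
          qed
          then have ay: "\<bar>y\<bar> = int g1" using t by (simp add: abs_mult)
          have "int g2 dvd \<bar>y\<bar>" using g2y by simp
          then have "int g2 dvd int g1" using ay by simp
          then have "int g2 dvd int k - 1" by (rule dvd_trans[OF _ g1k])
          then have "int g2 dvd (int k + 1) - (int k - 1)" by (rule dvd_diff[OF g2k])
          then have "int g2 dvd 2" by simp
          then have "g2 dvd 2" using int_dvd_int_iff[of g2 2] by simp
          moreover have "odd g2"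
          proof
            assume "even g2"
            then have "2 dvd int g2" by simp
            then have "2 dvd y" by (rule dvd_trans[OF _ g2y])
            then show False using oy by simp
          qed
          moreover have "g2 \<le> 2" using \<open>g2 dvd 2\<close> by (rule dvd_imp_le) simp
          ultimately have "g2 = 1" by (cases "g2 = 0 \<or> g2 = 2") auto
          then show ?thesis using L3 by simp
        qed
      qed
    qed
  qed
  then show "min (gcd n (k - 1)) (gcd n (k + 1)) + 2 \<le> L" unfolding g1_def g2_def .
qed

theorem theorem2:
  fixes n k :: nat
  assumes "2 < 2 * k" and "2 * k \<le> n"
    and "\<not> bipartite (pet_V n) (pet_E n k)"
  shows "odd_girth (pet_V n) (pet_E n k) = k + 3 \<or>
    (max (real n / real k) (real (min (gcd n (k - 1)) (gcd n (k + 1))) + 2)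
        \<le> real (odd_girth (pet_V n) (pet_E n k)) \<and>
     real (odd_girth (pet_V n) (pet_E n k)) \<le> real n / real k * real (par k) + real k + 1)"
proof -
  have k2: "2 \<le> k" using assms(1) by simp
  have kn: "2 * k \<le> n" by (rule assms(2))
  have nb: "odd n \<or> even k" using bip assms(3) by blast
  define P where "P L = (\<exists>xs. is_cycle (pet_V n) (pet_E n k) xs \<and> length xs = L \<and> odd L)" for L
  define og where "og = odd_girth (pet_V n) (pet_E n k)"
  have ogdef: "og = (LEAST L. P L)" unfolding og_def odd_girth_def P_def by simp
  have le: "og \<le> L" if "P L" for L unfolding ogdef by (rule Least_le) (rule that)
  have evub: "P (k+3)" if "even k"
    unfolding P_def using cycA[OF k2 kn] that by (intro exI[of _ "map (\<lambda>i. if i \<le> k then (False,i) else if i = k+1 then (True,k) else (True,0)) [0..<k+3]"]) simp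
  define q where "q = (n - 1) div k"
  define r where "r = (n - 1) mod k + 1"
  have rq: "r + q * k = n"
  proof -
    have "(n-1) div k * k + (n-1) mod k = n - 1" by (rule div_mult_mod_eq)
    then show ?thesis unfolding r_def q_def using kn k2 by linarith
  qed
  have r1: "r \<ge> 1" unfolding r_def by simp
  have rk: "r \<le> k" unfolding r_def using k2 by (simp add: Suc_leI)
  have q1: "q \<ge> 1" unfolding q_def using k2 kn by (simp add: div_greater_zero_iff Suc_leI)
  have odub: "P (r+q+2)" if "odd k" "odd n"
  proof -
    have "even (q*k) \<longleftrightarrow> even q" using that by simp
    moreover have "odd (r + q*k)" using rq that(2) by simp
    ultimately have "odd (r+q+2)" by auto
    then show ?thesis
      unfolding P_def using cycB[OF r1 q1 rq] k2
      by (intro exI[of _ "map (\<lambda>i. if i \<le> r then (False,i) else (True,(r+(i-r-1)*k) mod n)) [0..<r+q+2]"]) simp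
  qed
  have ex: "\<exists>L. P L" using evub odub nb by blast
  have Pog: "P og" unfolding ogdef using ex by (rule LeastI_ex)
  then obtain xs where xs: "is_cycle (pet_V n) (pet_E n k) xs" "length xs = og" "odd og" unfolding P_def by blast
  have L3: "og \<ge> 3" using xs unfolding is_cycle_def by simp
  obtain x y where xy: "int n dvd (x + int k * y)" "odd (x+y)" "\<bar>x\<bar>+\<bar>y\<bar> \<le> int og"
     "x \<noteq> 0 \<and> y \<noteq> 0 \<longrightarrow> \<bar>x\<bar>+\<bar>y\<bar>+2 \<le> int og"
    using proj[OF xs(1)] xs(2,3) by auto
  have ev: "og \<le> k+3" if "even k" using le[OF evub[OF that]] .
  show ?thesis
  proof (cases "og = k+3")
    case True then show ?thesis unfolding og_def by simp
  next
    case ne: False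
    have A1: "n \<le> k * og" and A2: "min (gcd n (k - 1)) (gcd n (k + 1)) + 2 \<le> og"
      using arith_main[OF k2 kn xy(1) xy(2) xy(3) xy(4) L3 ev ne] by auto
    have kpos: "real k > 0" using k2 by simp
    have R1: "real n / real k \<le> real og"
    proof -
      have "real n \<le> real k * real og" using A1 by (simp only: of_nat_mult[symmetric] of_nat_le_iff)
      then show ?thesis using kpos by (simp add: divide_le_eq mult.commute)
    qed
    have R2: "real (min (gcd n (k - 1)) (gcd n (k + 1))) + 2 \<le> real og" using A2 by linarith
    have R3: "real og \<le> real n / real k * real (par k) + real k + 1"
    proof (cases "even k")
      case True
      have "og \<le> k+3" using ev True .
      moreover have "og \<noteq> k+2" using xs(3) True by auto
      ultimately have "og \<le> k+1" using ne by linarith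
      then show ?thesis using True by (simp add: par_def)
    next
      case False
      then have "odd n" using nb by simp
      have "og \<le> r+q+2" using le[OF odub[OF False \<open>odd n\<close>]] .
      have n0: "real n = real r + real k * real q" using rq by (simp flip: of_nat_mult of_nat_add add: mult.commute)
      have nn: "0 \<le> (real k - real r) * (real k - 1)" using rk k2 by (intro mult_nonneg_nonneg) simp_all
      have E: "(real k - real r) * (real k - 1) = real k * real k - real k - real k * real r + real r" by (simp add: algebra_simps)
      have E2: "real k * real (r+q+2) = real k * real r + real k * real q + 2 * real k" by (simp add: algebra_simps)
      have "real k * real og \<le> real k * real (r+q+2)" using \<open>og \<le> r+q+2\<close> kpos by (intro mult_left_mono) simp_all
      then have "real k * real og \<le> real n + real k * real k + real k" using n0 nn E E2 by linarith
      then have "real og \<le> real n / real k + real k + 1" using kpos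
        by (simp add: field_simps)
      then show ?thesis using False by (simp add: par_def)
    qed
    show ?thesis using R1 R2 R3 unfolding og_def by simp
  qed
qed

end
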